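(* Let $\Omega$ be a compact metric space, $\varphi:\Omega\to\Omega$ continuous, and let $\mathcal{V}=\{V_n\}\subset\mathcal{L}(X^* )$ be an ergodic operator sequence converging in the $\mathrm{W^*O}$-topology to an operator $Q$. Then for every $\varphi$-ergodic Borel probability measure $\mu$ on $\Omega$ the set $\Omega_{\mu,\mathcal{V}}=\{\omega\in\Omega:Q\delta_\omega=\mu\}$ is a Borel set with $\mu(\Omega_{\mu,\mathcal{V}})=1$.
   Context: $X=C(\Omega)$, $X^*$ the space of Radon measures, pairing $(x,\mu)$; $Ux=x\circ\varphi$, $V=U^*$. $\mathrm{W^*O}$-convergence $T_n\to T$ means $(x,T_n\mu)\to(x,T\mu)$ for all $x\in X,\mu\in X^*$. A sequence $\{V_n\}\subseteq\operatorname{co}\{V^k:k\in\mathbb{N}_0\}$ is ergodic if $(x,(\operatorname{Id}-V)V_n\mu)\to0$ for all $x\in X,\mu\in X^*$. $\delta_\omega$ is the Dirac measure at $\omega$; thus $Q\delta_\omega$ is the weak-star limit of $V_n\delta_\omega$. *)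

theory Defs
  imports "HOL-Probability.Probability"
begin

text \<open>X = C(Omega) is the type of bounded continuous real functions on the compact
metric space Omega (all continuous functions are bounded on a compact space).
X* is realised as the continuous dual of X; by the Riesz representation theorem
these are exactly the (signed) Radon measures, the pairing (x, mu) being application.\<close>

type_synonym 'a dualC = "('a \<Rightarrow>\<^sub>C real) \<Rightarrow>\<^sub>L real"

definition Uop :: "('a::metric_space \<Rightarrow> 'a) \<Rightarrow> ('a \<Rightarrow>\<^sub>C real) \<Rightarrow>\<^sub>L ('a \<Rightarrow>\<^sub>C real)" where
  "Uop \<phi> = Blinfun (\<lambda>x. Bcontfun (\<lambda>\<omega>. apply_bcontfun x (\<phi> \<omega>)))"

definition Vop :: "('a::metric_space \<Rightarrow> 'a) \<Rightarrow> 'a dualC \<Rightarrow>\<^sub>L 'a dualC" where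
  "Vop \<phi> = Blinfun (\<lambda>\<nu>. \<nu> o\<^sub>L Uop \<phi>)"

definition Vpow :: "('a::metric_space \<Rightarrow> 'a) \<Rightarrow> nat \<Rightarrow> 'a dualC \<Rightarrow>\<^sub>L 'a dualC" where
  "Vpow \<phi> k = ((\<lambda>T. Vop \<phi> o\<^sub>L T) ^^ k) id_blinfun"

definition dirac_fun :: "'a::metric_space \<Rightarrow> 'a dualC" where
  "dirac_fun \<omega> = Blinfun (\<lambda>x. apply_bcontfun x \<omega>)"

definition ergodic_op_seq :: "('a::metric_space \<Rightarrow> 'a) \<Rightarrow> (nat \<Rightarrow> 'a dualC \<Rightarrow>\<^sub>L 'a dualC) \<Rightarrow> bool" where
  "ergodic_op_seq \<phi> Vs \<longleftrightarrow>
     (\<forall>n. Vs n \<in> convex hull (range (Vpow \<phi>))) \<and>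
     (\<forall>x \<nu>. (\<lambda>n. blinfun_apply (Vs n \<nu> - Vop \<phi> (Vs n \<nu>)) x) \<longlonglongrightarrow> 0)"

definition wstar_op_conv :: "(nat \<Rightarrow> ('a::metric_space) dualC \<Rightarrow>\<^sub>L 'a dualC) \<Rightarrow> ('a dualC \<Rightarrow>\<^sub>L 'a dualC) \<Rightarrow> bool" where
  "wstar_op_conv Ts T \<longleftrightarrow> (\<forall>x \<nu>. (\<lambda>n. blinfun_apply (Ts n \<nu>) x) \<longlonglongrightarrow> blinfun_apply (T \<nu>) x)"

definition phi_ergodic :: "('a::metric_space \<Rightarrow> 'a) \<Rightarrow> 'a measure \<Rightarrow> bool" where
  "phi_ergodic \<phi> \<mu> \<longleftrightarrow> prob_space \<mu> \<and> sets \<mu> = sets borel \<and>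
     \<phi> \<in> measurable \<mu> \<mu> \<and> distr \<mu> \<mu> \<phi> = \<mu> \<and>
     (\<forall>A\<in>sets \<mu>. \<phi> -` A = A \<longrightarrow> emeasure \<mu> A = 0 \<or> emeasure \<mu> A = 1)"

end

theory Submission
  imports Defs
begin



lemma dirac_apply[simp]: "blinfun_apply (dirac_fun \<omega>) x = apply_bcontfun x \<omega>"
proof -
  have "bounded_linear (\<lambda>x::'a \<Rightarrow>\<^sub>C real. apply_bcontfun x \<omega>)"
    by (rule bounded_linear_intro[where K=1]) (auto simp: norm_bounded[where 'b=real, simplified])
  then show ?thesis unfolding dirac_fun_def by (simp add: bounded_linear_Blinfun_apply)
qed

lemma comp_bcontfun:
  fixes x :: "'a::metric_space \<Rightarrow>\<^sub>C real"
  assumes "continuous_on UNIV \<phi>"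
  shows "(\<lambda>\<omega>. apply_bcontfun x (\<phi> \<omega>)) \<in> bcontfun"
proof (rule bcontfun_normI[where b="norm x"])
  show "continuous_on UNIV (\<lambda>\<omega>. apply_bcontfun x (\<phi> \<omega>))"
    by (rule continuous_on_compose2[OF continuous_on_apply_bcontfun[of UNIV] assms]) simp
  fix \<omega> show "norm (apply_bcontfun x (\<phi> \<omega>)) \<le> norm x" by (rule norm_bounded)
qed

lemma Uop_apply:
  assumes "continuous_on UNIV \<phi>"
  shows "apply_bcontfun (blinfun_apply (Uop \<phi>) x) \<omega> = apply_bcontfun x (\<phi> \<omega>)"
proof -
  have bl: "bounded_linear (\<lambda>x::'a \<Rightarrow>\<^sub>C real. Bcontfun (\<lambda>\<omega>. apply_bcontfun x (\<phi> \<omega>)))"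
  proof (rule bounded_linear_intro[where K=1])
    fix x y :: "'a \<Rightarrow>\<^sub>C real" and r :: real
    show "Bcontfun (\<lambda>\<omega>. apply_bcontfun (x + y) (\<phi> \<omega>)) = Bcontfun (\<lambda>\<omega>. apply_bcontfun x (\<phi> \<omega>)) + Bcontfun (\<lambda>\<omega>. apply_bcontfun y (\<phi> \<omega>))"
      using comp_bcontfun[OF assms, of "x+y"] comp_bcontfun[OF assms, of x] comp_bcontfun[OF assms, of y]
      by (intro bcontfun_eqI) (simp add: Bcontfun_inverse)
    show "Bcontfun (\<lambda>\<omega>. apply_bcontfun (r *\<^sub>R x) (\<phi> \<omega>)) = r *\<^sub>R Bcontfun (\<lambda>\<omega>. apply_bcontfun x (\<phi> \<omega>))"
      using comp_bcontfun[OF assms, of "r *\<^sub>R x"] comp_bcontfun[OF assms, of x]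
      by (intro bcontfun_eqI) (simp add: Bcontfun_inverse)
    show "norm (Bcontfun (\<lambda>\<omega>. apply_bcontfun x (\<phi> \<omega>))) \<le> norm x * 1"
      by (rule norm_bound) (simp add: Bcontfun_inverse comp_bcontfun[OF assms] norm_bounded[where 'b=real, simplified])
  qed
  show ?thesis unfolding Uop_def
    by (simp add: bounded_linear_Blinfun_apply[OF bl] Bcontfun_inverse comp_bcontfun[OF assms])
qed

lemma Vop_apply[simp]: "blinfun_apply (Vop \<phi>) \<nu> = \<nu> o\<^sub>L Uop \<phi>"
proof -
  have "bounded_linear (\<lambda>\<nu>::'a dualC. \<nu> o\<^sub>L Uop \<phi>)"
    by (rule bounded_bilinear.bounded_linear_left[OF bounded_bilinear_blinfun_compose])
  then show ?thesis unfolding Vop_def by (simp add: bounded_linear_Blinfun_apply)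
qed

lemma Vpow_Suc: "Vpow \<phi> (Suc k) = Vop \<phi> o\<^sub>L Vpow \<phi> k"
  by (simp add: Vpow_def)

lemma cont_iter: fixes \<phi> :: "'a::topological_space \<Rightarrow> 'a" shows "continuous_on UNIV \<phi> \<Longrightarrow> continuous_on UNIV (\<phi> ^^ k)"
proof (induction k)
  case (Suc k)
  then have "continuous_on UNIV (\<phi> o (\<phi> ^^ k))"
    by (intro continuous_on_compose) (auto intro: continuous_on_subset)
  then show ?case by simp
qed (simp add: continuous_on_id)

lemma Vpow_dirac:
  assumes "continuous_on UNIV \<phi>"
  shows "blinfun_apply (blinfun_apply (Vpow \<phi> k) (dirac_fun \<omega>)) x = apply_bcontfun x ((\<phi> ^^ k) \<omega>)"
proof (induction k arbitrary: x)
  case 0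
  then show ?case by (simp add: Vpow_def)
next
  case (Suc k)
  show ?case by (simp add: Vpow_Suc Suc Uop_apply[OF assms])
qed




definition good :: "('a::metric_space \<Rightarrow> 'a) \<Rightarrow> 'a measure \<Rightarrow> ('a dualC \<Rightarrow>\<^sub>L 'a dualC) \<Rightarrow> bool" where
  "good \<phi> \<mu> T \<longleftrightarrow>
    (\<forall>x. continuous_on UNIV (\<lambda>\<omega>. blinfun_apply (blinfun_apply T (dirac_fun \<omega>)) x)) \<and>
    (\<forall>x \<omega>. \<bar>blinfun_apply (blinfun_apply T (dirac_fun \<omega>)) x\<bar> \<le> norm x) \<and>
    (\<forall>x. (\<integral>\<omega>. blinfun_apply (blinfun_apply T (dirac_fun \<omega>)) x \<partial>\<mu>) = (\<integral>\<omega>. apply_bcontfun x \<omega> \<partial>\<mu>)) \<and>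
    (\<forall>x \<omega>. blinfun_apply (blinfun_apply T (dirac_fun \<omega>)) (blinfun_apply (Uop \<phi>) x)
        = blinfun_apply (blinfun_apply T (dirac_fun (\<phi> \<omega>))) x)"

context
  fixes \<phi> :: "'a::metric_space \<Rightarrow> 'a" and \<mu> :: "'a measure"
  assumes c\<phi>: "continuous_on UNIV \<phi>" and erg: "phi_ergodic \<phi> \<mu>"
begin

lemma P: "prob_space \<mu>" using erg by (simp add: phi_ergodic_def)
lemma S: "sets \<mu> = sets borel" using erg by (simp add: phi_ergodic_def)
lemma Sp: "space \<mu> = UNIV" using sets_eq_imp_space_eq[OF S] by simp
lemma meas_cont: "continuous_on UNIV f \<Longrightarrow> f \<in> borel_measurable \<mu>"
  using borel_measurable_continuous_onI measurable_cong_sets[OF S refl] by blast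

lemma int_cont:
  fixes f :: "'a \<Rightarrow> real"
  assumes "continuous_on UNIV f" "\<And>\<omega>. \<bar>f \<omega>\<bar> \<le> B"
  shows "integrable \<mu> f"
proof -
  interpret prob_space \<mu> by (rule P)
  show ?thesis by (rule integrable_const_bound[where B=B]) (auto simp: assms meas_cont)
qed

lemma m\<phi>: "\<phi> \<in> measurable \<mu> \<mu>" using erg by (simp add: phi_ergodic_def)
lemma mk: "(\<phi> ^^ k) \<in> measurable \<mu> \<mu>" 
    by (induction k) (auto intro: measurable_comp[OF _ m\<phi>, simplified comp_def] simp: measurable_ident[unfolded id_def])

lemma distr_iter: "distr \<mu> \<mu> (\<phi> ^^ k) = \<mu>"
proof (induction k)
  case 0
  then show ?case by (simp add: distr_id[unfolded id_def])
next
  case (Suc k)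
  note m = m\<phi> and mk = mk[of k]
  have "distr \<mu> \<mu> (\<phi> ^^ Suc k) = distr \<mu> \<mu> (\<phi> \<circ> (\<phi> ^^ k))" by simp
  also have "\<dots> = distr (distr \<mu> \<mu> (\<phi> ^^ k)) \<mu> \<phi>" by (rule distr_distr[OF m mk, symmetric])
  also have "\<dots> = \<mu>" using Suc erg by (simp add: phi_ergodic_def)
  finally show ?case .
qed

lemma good_Vpow: "good \<phi> \<mu> (Vpow \<phi> k)"
  unfolding good_def Vpow_dirac[OF c\<phi>]
proof (intro conjI allI)
  fix x :: "'a \<Rightarrow>\<^sub>C real" and \<omega>
  show "continuous_on UNIV (\<lambda>\<omega>. apply_bcontfun x ((\<phi> ^^ k) \<omega>))"
    by (rule continuous_on_compose2[OF continuous_on_apply_bcontfun[of UNIV] cont_iter[OF c\<phi>]]) simp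
  show "\<bar>apply_bcontfun x ((\<phi> ^^ k) \<omega>)\<bar> \<le> norm x" using norm_bounded[of x] by simp
  show "apply_bcontfun (blinfun_apply (Uop \<phi>) x) ((\<phi> ^^ k) \<omega>) = apply_bcontfun x ((\<phi> ^^ k) (\<phi> \<omega>))"
    by (simp add: Uop_apply[OF c\<phi>] funpow_swap1)
  have "(\<integral>\<omega>. apply_bcontfun x \<omega> \<partial>\<mu>) = (\<integral>\<omega>. apply_bcontfun x \<omega> \<partial>(distr \<mu> \<mu> (\<phi> ^^ k)))"
    by (simp add: distr_iter)
  also have "\<dots> = (\<integral>\<omega>. apply_bcontfun x ((\<phi> ^^ k) \<omega>) \<partial>\<mu>)"
    by (rule integral_distr[OF mk]) (auto intro: meas_cont)
  finally show "(\<integral>\<omega>. apply_bcontfun x ((\<phi> ^^ k) \<omega>) \<partial>\<mu>) = (\<integral>\<omega>. apply_bcontfun x \<omega> \<partial>\<mu>)" by simp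
qed

lemma good_convex: "convex {T. good \<phi> \<mu> T}"
proof (rule convexI)
  fix A B :: "'a dualC \<Rightarrow>\<^sub>L 'a dualC" and u v :: real
  assume gA': "A \<in> {T. good \<phi> \<mu> T}" and gB': "B \<in> {T. good \<phi> \<mu> T}" and uv: "0 \<le> u" "0 \<le> v" "u + v = 1"
  have gA: "good \<phi> \<mu> A" and gB: "good \<phi> \<mu> B" using gA' gB' by auto
  let ?a = "\<lambda>x \<omega>. blinfun_apply (blinfun_apply A (dirac_fun \<omega>)) x"
  let ?b = "\<lambda>x \<omega>. blinfun_apply (blinfun_apply B (dirac_fun \<omega>)) x"
  have ev: "blinfun_apply (blinfun_apply (u *\<^sub>R A + v *\<^sub>R B) \<nu>) x = u * blinfun_apply (blinfun_apply A \<nu>) x + v * blinfun_apply (blinfun_apply B \<nu>) x" for \<nu> x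
    by (simp add: blinfun.add_left blinfun.scaleR_left)
  have h1: "continuous_on UNIV (\<lambda>\<omega>. u * ?a x \<omega> + v * ?b x \<omega>)"
   and h2: "\<bar>u * ?a x \<omega> + v * ?b x \<omega>\<bar> \<le> norm x"
   and h3: "(\<integral>\<omega>. u * ?a x \<omega> + v * ?b x \<omega> \<partial>\<mu>) = (\<integral>\<omega>. apply_bcontfun x \<omega> \<partial>\<mu>)"
   and h4: "u * ?a (blinfun_apply (Uop \<phi>) x) \<omega> + v * ?b (blinfun_apply (Uop \<phi>) x) \<omega> = u * ?a x (\<phi> \<omega>) + v * ?b x (\<phi> \<omega>)"
   for x :: "'a \<Rightarrow>\<^sub>C real" and \<omega>
  proof -
    have cA: "continuous_on UNIV (?a x)" and cB: "continuous_on UNIV (?b x)"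
      using gA gB by (auto simp: good_def)
    show "continuous_on UNIV (\<lambda>\<omega>. u * ?a x \<omega> + v * ?b x \<omega>)"
      by (intro continuous_intros cA cB)
    have bA: "\<bar>?a x \<omega>\<bar> \<le> norm x" and bB: "\<bar>?b x \<omega>\<bar> \<le> norm x" for \<omega>
      using gA gB by (auto simp: good_def)
    have "\<bar>u * ?a x \<omega> + v * ?b x \<omega>\<bar> \<le> u * \<bar>?a x \<omega>\<bar> + v * \<bar>?b x \<omega>\<bar>"
      using uv by (simp add: abs_mult abs_triangle_ineq[THEN order_trans])
    also have "\<dots> \<le> u * norm x + v * norm x"
      using uv bA bB by (intro add_mono mult_left_mono) auto
    finally show "\<bar>u * ?a x \<omega> + v * ?b x \<omega>\<bar> \<le> norm x" using uv by (simp add: distrib_right[symmetric])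
    have iA: "integrable \<mu> (?a x)" and iB: "integrable \<mu> (?b x)"
      using int_cont[OF cA bA] int_cont[OF cB bB] by auto
    have "(\<integral>\<omega>. u * ?a x \<omega> + v * ?b x \<omega> \<partial>\<mu>) = u * (\<integral>\<omega>. ?a x \<omega> \<partial>\<mu>) + v * (\<integral>\<omega>. ?b x \<omega> \<partial>\<mu>)"
      using iA iB by simp
    also have "\<dots> = (u + v) * (\<integral>\<omega>. apply_bcontfun x \<omega> \<partial>\<mu>)"
      using gA gB by (simp add: good_def distrib_right)
    finally show "(\<integral>\<omega>. u * ?a x \<omega> + v * ?b x \<omega> \<partial>\<mu>) = (\<integral>\<omega>. apply_bcontfun x \<omega> \<partial>\<mu>)" using uv by simp
    show "u * ?a (blinfun_apply (Uop \<phi>) x) \<omega> + v * ?b (blinfun_apply (Uop \<phi>) x) \<omega> = u * ?a x (\<phi> \<omega>) + v * ?b x (\<phi> \<omega>)"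
      using gA gB by (simp add: good_def)
  qed
  show "u *\<^sub>R A + v *\<^sub>R B \<in> {T. good \<phi> \<mu> T}"
    unfolding mem_Collect_eq good_def ev using h1 h2 h3 h4 by blast
qed

lemma good_hull: "T \<in> convex hull (range (Vpow \<phi>)) \<Longrightarrow> good \<phi> \<mu> T"
  using hull_minimal[of "range (Vpow \<phi>)" "{T. good \<phi> \<mu> T}" convex] good_convex good_Vpow by blast

end



context
  fixes \<phi> :: "'a::metric_space \<Rightarrow> 'a" and \<mu> :: "'a measure"
  assumes c\<phi>: "continuous_on UNIV \<phi>" and erg: "phi_ergodic \<phi> \<mu>"
begin

lemma inv_le:
  fixes f :: "'a \<Rightarrow> real"
  assumes fm: "f \<in> borel_measurable \<mu>" and fi: "integrable \<mu> f" and finv: "\<And>\<omega>. f (\<phi> \<omega>) = f \<omega>"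
  shows "AE \<omega> in \<mu>. f \<omega> \<le> integral\<^sup>L \<mu> f"
proof -
  interpret prob_space \<mu> by (rule P[OF c\<phi> erg])
  note Sp = Sp[OF c\<phi> erg]
  define c where "c = integral\<^sup>L \<mu> f"
  define A where "A = {\<omega>. c < f \<omega>}"
  have Am: "A \<in> sets \<mu>"
  proof -
    have "{\<omega>\<in>space \<mu>. c < f \<omega>} \<in> sets \<mu>" using fm by measurable
    then show ?thesis using Sp by (simp add: A_def)
  qed
  have "\<phi> -` A = A" by (auto simp: A_def finv)
  then have "emeasure \<mu> A = 0 \<or> emeasure \<mu> A = 1" using erg Am by (simp add: phi_ergodic_def)
  moreover have "emeasure \<mu> A \<noteq> 1"
  proof
    assume "emeasure \<mu> A = 1"
    then have "prob A = 1" by (simp add: emeasure_eq_measure)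
    then have aeA: "AE \<omega> in \<mu>. \<omega> \<in> A" using AE_in_set_eq_1[OF Am] by simp
    then have pos: "AE \<omega> in \<mu>. 0 \<le> f \<omega> - c" by eventually_elim (auto simp: A_def)
    have "integral\<^sup>L \<mu> (\<lambda>\<omega>. f \<omega> - c) = 0" using fi by (simp add: c_def prob_space)
    then have "AE \<omega> in \<mu>. f \<omega> - c = 0"
      using integral_nonneg_eq_0_iff_AE[OF _ pos] fi by auto
    with aeA have "AE \<omega> in \<mu>. False" by eventually_elim (auto simp: A_def)
    then show False by simp
  qed
  ultimately have "emeasure \<mu> A = 0" by blast
  then have "AE \<omega> in \<mu>. \<omega> \<notin> A" using AE_iff_measurable[OF Am, of "\<lambda>\<omega>. \<omega> \<notin> A"] Sp by auto
  then show ?thesis by eventually_elim (auto simp: A_def c_def)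
qed

lemma inv_const:
  fixes f :: "'a \<Rightarrow> real"
  assumes fm: "f \<in> borel_measurable \<mu>" and fi: "integrable \<mu> f" and finv: "\<And>\<omega>. f (\<phi> \<omega>) = f \<omega>"
  shows "AE \<omega> in \<mu>. f \<omega> = integral\<^sup>L \<mu> f"
proof -
  have 1: "AE \<omega> in \<mu>. f \<omega> \<le> integral\<^sup>L \<mu> f" by (rule inv_le[OF fm fi finv])
  have "AE \<omega> in \<mu>. - f \<omega> \<le> integral\<^sup>L \<mu> (\<lambda>\<omega>. - f \<omega>)"
    by (rule inv_le) (use fm fi finv in auto)
  then have 2: "AE \<omega> in \<mu>. f \<omega> \<ge> integral\<^sup>L \<mu> f" by simp
  from 1 2 show ?thesis by eventually_elim simp
qed

end



context
  fixes \<phi> :: "'a::metric_space \<Rightarrow> 'a" and \<mu> :: "'a measure"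
    and Vs :: "nat \<Rightarrow> 'a dualC \<Rightarrow>\<^sub>L 'a dualC" and Q :: "'a dualC \<Rightarrow>\<^sub>L 'a dualC"
  assumes c\<phi>: "continuous_on UNIV \<phi>" and erg: "phi_ergodic \<phi> \<mu>"
    and eos: "ergodic_op_seq \<phi> Vs" and wc: "wstar_op_conv Vs Q"
begin

definition "F x \<omega> = blinfun_apply (blinfun_apply Q (dirac_fun \<omega>)) x"
definition "G n x \<omega> = blinfun_apply (blinfun_apply (Vs n) (dirac_fun \<omega>)) x"

lemma gd: "good \<phi> \<mu> (Vs n)"
  using good_hull[OF c\<phi> erg] eos by (simp add: ergodic_op_seq_def)

lemma lim: "(\<lambda>n. G n x \<omega>) \<longlonglongrightarrow> F x \<omega>"
  using wc by (simp add: wstar_op_conv_def F_def G_def)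

lemma Gcont: "continuous_on UNIV (G n x)"
  using gd[of n] by (simp add: good_def G_def)

lemma Gbd: "\<bar>G n x \<omega>\<bar> \<le> norm x"
  using gd[of n] by (simp add: good_def G_def)

lemma Fm: "F x \<in> borel_measurable \<mu>"
  by (rule borel_measurable_LIMSEQ_real[OF lim meas_cont[OF c\<phi> erg Gcont]])

lemma Fbd: "\<bar>F x \<omega>\<bar> \<le> norm x"
  by (rule LIMSEQ_le_const2[OF tendsto_rabs[OF lim]]) (auto simp: Gbd)

lemma Fdiff: "F x \<omega> - F y \<omega> = F (x - y) \<omega>"
  by (simp add: F_def blinfun.diff_right)

lemma Finv: "F x (\<phi> \<omega>) = F x \<omega>"
proof -
  have e: "(\<lambda>n. G n x \<omega> - G n (blinfun_apply (Uop \<phi>) x) \<omega>) \<longlonglongrightarrow> 0"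
    using eos unfolding ergodic_op_seq_def G_def
    by (auto simp: blinfun.diff_left)
  have "(\<lambda>n. G n x \<omega> - (G n x \<omega> - G n (blinfun_apply (Uop \<phi>) x) \<omega>)) \<longlonglongrightarrow> F x \<omega> - 0"
    by (intro tendsto_diff lim e)
  then have "(\<lambda>n. G n x (\<phi> \<omega>)) \<longlonglongrightarrow> F x \<omega>"
    using gd by (simp add: good_def G_def)
  then show ?thesis using lim LIMSEQ_unique by blast
qed

lemma Fint: "integrable \<mu> (F x)" and Fint_eq: "integral\<^sup>L \<mu> (F x) = (\<integral>\<omega>. apply_bcontfun x \<omega> \<partial>\<mu>)"
proof -
  interpret prob_space \<mu> by (rule P[OF c\<phi> erg])
  have a: "F x \<in> borel_measurable \<mu>" "\<And>n. G n x \<in> borel_measurable \<mu>" "integrable \<mu> (\<lambda>_. norm x)"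
    "AE \<omega> in \<mu>. (\<lambda>n. G n x \<omega>) \<longlonglongrightarrow> F x \<omega>" "\<And>n. AE \<omega> in \<mu>. norm (G n x \<omega>) \<le> norm x"
    by (auto simp: Fm meas_cont[OF c\<phi> erg Gcont] lim Gbd)
  show "integrable \<mu> (F x)" by (rule integrable_dominated_convergence[OF a])
  have "(\<lambda>n. integral\<^sup>L \<mu> (G n x)) \<longlonglongrightarrow> integral\<^sup>L \<mu> (F x)" by (rule integral_dominated_convergence[OF a])
  moreover have "integral\<^sup>L \<mu> (G n x) = (\<integral>\<omega>. apply_bcontfun x \<omega> \<partial>\<mu>)" for n
    using gd[of n] by (simp add: good_def G_def[abs_def])
  ultimately have "(\<lambda>n. (\<integral>\<omega>. apply_bcontfun x \<omega> \<partial>\<mu>)) \<longlonglongrightarrow> integral\<^sup>L \<mu> (F x)" by simp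
  then show "integral\<^sup>L \<mu> (F x) = (\<integral>\<omega>. apply_bcontfun x \<omega> \<partial>\<mu>)"
    using LIMSEQ_unique[OF _ tendsto_const] by blast
qed

lemma Fae: "AE \<omega> in \<mu>. F x \<omega> = (\<integral>\<omega>. apply_bcontfun x \<omega> \<partial>\<mu>)"
  using inv_const[OF c\<phi> erg Fm Fint Finv] Fint_eq by simp

lemma Fset: "{\<omega>. F x \<omega> = c} \<in> sets borel"
proof -
  have "{\<omega>\<in>space \<mu>. F x \<omega> = c} \<in> sets \<mu>" using Fm by measurable
  then show ?thesis using Sp[OF c\<phi> erg] S[OF c\<phi> erg] by simp
qed

end



lemma cont_bcontfun:
  fixes f :: "'a::metric_space \<Rightarrow> real"
  assumes "compact (UNIV :: 'a set)" "continuous_on UNIV f"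
  shows "f \<in> bcontfun"
  using compact_imp_bounded[OF compact_continuous_image[OF assms(2) assms(1)]] assms(2)
  by (simp add: bcontfun_def)

lemma dense_countable:
  assumes cpt: "compact (UNIV :: 'a::metric_space set)"
  shows "\<exists>D::('a \<Rightarrow>\<^sub>C real) set. countable D \<and> (\<forall>x. \<forall>e>0. \<exists>d\<in>D. norm (x - d) \<le> e)"
proof -
  define r :: "nat \<Rightarrow> real" where "r n = inverse (real (Suc n))" for n
  have rpos: "r n > 0" for n by (simp add: r_def)
  have tb: "\<forall>\<epsilon>>0. \<exists>k. finite k \<and> k \<subseteq> (UNIV::'a set) \<and> UNIV \<subseteq> (\<Union>x\<in>k. ball x \<epsilon>)"
    by (rule seq_compact_imp_totally_bounded[OF compact_imp_seq_compact[OF cpt]])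
  have "\<forall>n. \<exists>k::'a set. finite k \<and> (UNIV::'a set) \<subseteq> (\<Union>x\<in>k. ball x (r n))" using tb rpos by blast
  then obtain N :: "nat \<Rightarrow> 'a set" where Nfin: "\<And>n. finite (N n)" and Ncov: "\<And>n. (UNIV::'a set) \<subseteq> (\<Union>x\<in>N n. ball x (r n))"
    by metis
  define h where "h n d \<omega> = max 0 (2 * r n - dist \<omega> d)" for n d and \<omega> :: 'a
  define H where "H n \<omega> = (\<Sum>d\<in>N n. h n d \<omega>)" for n \<omega>
  have hnn: "h n d \<omega> \<ge> 0" for n d \<omega> by (simp add: h_def)
  have Hpos: "H n \<omega> > 0" for n \<omega>
  proof -
    have "\<omega> \<in> (\<Union>x\<in>N n. ball x (r n))" using Ncov[of n] by blast
    then obtain d where d: "d \<in> N n" "dist d \<omega> < r n" by auto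
    have "0 < h n d \<omega>" using d rpos[of n] by (simp add: h_def dist_commute)
    also have "\<dots> \<le> H n \<omega>" unfolding H_def by (rule member_le_sum[OF d(1)]) (use hnn Nfin in auto)
    finally show ?thesis .
  qed
  define g where "g n q \<omega> = (\<Sum>d\<in>N n. q d * (h n d \<omega> / H n \<omega>))" for n q \<omega>
  have hc: "continuous_on UNIV (h n d)" for n d
    unfolding h_def[abs_def] by (intro continuous_intros)
  have Hc: "continuous_on UNIV (H n)" for n
    unfolding H_def[abs_def] by (intro continuous_intros hc)
  have gc: "continuous_on UNIV (g n q)" for n q
    unfolding g_def[abs_def] using Hpos by (intro continuous_intros hc Hc) (auto simp: less_le)
  have gb: "g n q \<in> bcontfun" for n q by (rule cont_bcontfun[OF cpt gc])
  define D where "D = (\<Union>n. (\<lambda>q. Bcontfun (g n q)) ` (Pi\<^sub>E (N n) (\<lambda>_. \<rat>)))"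
  have "countable D" unfolding D_def
    by (intro countable_UN countable_image countable_PiE Nfin countable_rat) auto
  moreover have "\<exists>d\<in>D. norm (x - d) \<le> e" if e: "e > 0" for x e
  proof -
    define e' where "e' = e / 2"
    have e': "e' > 0" using e by (simp add: e'_def)
    have "uniformly_continuous_on UNIV (apply_bcontfun x)"
      by (rule compact_uniformly_continuous[OF continuous_on_apply_bcontfun cpt])
    then obtain \<delta> where \<delta>: "\<delta> > 0" and uc: "\<And>a b. dist a b < \<delta> \<Longrightarrow> dist (apply_bcontfun x a) (apply_bcontfun x b) < e'"
      unfolding uniformly_continuous_on_def using e' by (metis UNIV_I)
    obtain n where n: "inverse (real (Suc n)) < \<delta> / 2" using reals_Archimedean[of "\<delta>/2"] \<delta> by auto
    have rn: "2 * r n < \<delta>" using n by (simp add: r_def)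
    have "\<forall>d. \<exists>q. q \<in> \<rat> \<and> \<bar>q - apply_bcontfun x d\<bar> < e'"
    proof
      fix d
      obtain q where "q \<in> \<rat>" "apply_bcontfun x d - e' < q" "q < apply_bcontfun x d + e'"
        using Rats_dense_in_real[of "apply_bcontfun x d - e'" "apply_bcontfun x d + e'"] e' by auto
      then show "\<exists>q. q \<in> \<rat> \<and> \<bar>q - apply_bcontfun x d\<bar> < e'" by (intro exI[of _ q]) auto
    qed
    then obtain q0 where q0: "\<And>d. q0 d \<in> \<rat>" "\<And>d. \<bar>q0 d - apply_bcontfun x d\<bar> < e'" by metis
    define q where "q d = (if d \<in> N n then q0 d else undefined)" for d
    have qP: "q \<in> Pi\<^sub>E (N n) (\<lambda>_. \<rat>)" by (auto simp: q_def q0 PiE_def extensional_def)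
    have bound: "\<bar>apply_bcontfun x \<omega> - g n q \<omega>\<bar> \<le> e" for \<omega>
    proof -
      let ?p = "\<lambda>d. h n d \<omega> / H n \<omega>"
      have sum1: "(\<Sum>d\<in>N n. ?p d) = 1"
        using Hpos[of n \<omega>] by (simp add: sum_divide_distrib[symmetric] H_def)
      have "apply_bcontfun x \<omega> - g n q \<omega> = (\<Sum>d\<in>N n. ?p d * (apply_bcontfun x \<omega> - q d))"
      proof -
        have "(\<Sum>d\<in>N n. ?p d * (apply_bcontfun x \<omega> - q d)) = (\<Sum>d\<in>N n. ?p d) * apply_bcontfun x \<omega> - g n q \<omega>"
          unfolding g_def sum_distrib_right sum_subtractf[symmetric] by (rule sum.cong) (auto simp: algebra_simps add_divide_distrib[symmetric])
        then show ?thesis using sum1 by simp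
      qed
      also have "\<bar>\<dots>\<bar> \<le> (\<Sum>d\<in>N n. \<bar>?p d * (apply_bcontfun x \<omega> - q d)\<bar>)" by (rule sum_abs)
      also have "\<dots> \<le> (\<Sum>d\<in>N n. ?p d * (2 * e'))"
      proof (rule sum_mono)
        fix d assume dN: "d \<in> N n"
        have pnn: "?p d \<ge> 0" using hnn Hpos[of n \<omega>] by (simp add: less_imp_le)
        show "\<bar>?p d * (apply_bcontfun x \<omega> - q d)\<bar> \<le> ?p d * (2 * e')"
        proof (cases "h n d \<omega> = 0")
          case True then show ?thesis by simp
        next
          case False
          then have "dist \<omega> d < 2 * r n" by (simp add: h_def max_def split: if_splits)
          then have "dist \<omega> d < \<delta>" using rn by simp
          then have "\<bar>apply_bcontfun x \<omega> - apply_bcontfun x d\<bar> < e'" using uc by (simp add: dist_real_def)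
          moreover have "\<bar>q d - apply_bcontfun x d\<bar> < e'" using q0 dN by (simp add: q_def)
          ultimately have "\<bar>apply_bcontfun x \<omega> - q d\<bar> \<le> 2 * e'" by linarith
          then have "?p d * \<bar>apply_bcontfun x \<omega> - q d\<bar> \<le> ?p d * (2 * e')" using pnn by (rule mult_left_mono)
          moreover have "\<bar>?p d * (apply_bcontfun x \<omega> - q d)\<bar> = ?p d * \<bar>apply_bcontfun x \<omega> - q d\<bar>"
            using pnn by (simp only: abs_mult abs_of_nonneg)
          ultimately show ?thesis by simp
        qed
      qed
      also have "\<dots> = (\<Sum>d\<in>N n. ?p d) * (2 * e')" by (rule sum_distrib_right[symmetric])
      also have "\<dots> = 2 * e'" using sum1 by simp
      finally show ?thesis by (simp add: e'_def)
    qed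
    have "norm (x - Bcontfun (g n q)) \<le> e"
      by (rule norm_bound) (use bound in \<open>simp add: Bcontfun_inverse[OF gb]\<close>)
    moreover have "Bcontfun (g n q) \<in> D" unfolding D_def using qP by blast
    ultimately show ?thesis by blast
  qed
  ultimately show ?thesis by blast
qed




theorem corollary4p2:
  fixes \<phi> :: "'a::metric_space \<Rightarrow> 'a"
    and Vs :: "nat \<Rightarrow> 'a dualC \<Rightarrow>\<^sub>L 'a dualC"
    and Q :: "'a dualC \<Rightarrow>\<^sub>L 'a dualC"
    and \<mu> :: "'a measure"
  assumes "compact (UNIV :: 'a set)"
    and "continuous_on UNIV \<phi>"
    and "ergodic_op_seq \<phi> Vs"
    and "wstar_op_conv Vs Q"
    and "phi_ergodic \<phi> \<mu>"
  shows "{\<omega>. \<forall>x. blinfun_apply (Q (dirac_fun \<omega>)) x = (\<integral>\<omega>'. apply_bcontfun x \<omega>' \<partial>\<mu>)} \<in> sets borel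
    \<and> emeasure \<mu> {\<omega>. \<forall>x. blinfun_apply (Q (dirac_fun \<omega>)) x = (\<integral>\<omega>'. apply_bcontfun x \<omega>' \<partial>\<mu>)} = 1"
proof -
  note cpt = assms(1) and c\<phi> = assms(2) and eos = assms(3) and wc = assms(4) and erg = assms(5)
  interpret prob_space \<mu> by (rule P[OF c\<phi> erg])
  define c :: "('a \<Rightarrow>\<^sub>C real) \<Rightarrow> real" where "c x = (\<integral>\<omega>'. apply_bcontfun x \<omega>' \<partial>\<mu>)" for x
  define F' :: "('a \<Rightarrow>\<^sub>C real) \<Rightarrow> 'a \<Rightarrow> real" where "F' x \<omega> = blinfun_apply (Q (dirac_fun \<omega>)) x" for x \<omega>
  have FF: "F' = F Q" by (intro ext) (simp add: F'_def F_def[OF c\<phi> erg eos wc])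
  have Fae: "AE \<omega> in \<mu>. F' x \<omega> = c x" for x
    unfolding FF c_def by (rule Fae[OF c\<phi> erg eos wc])
  have Fbd: "\<bar>F' x \<omega>\<bar> \<le> norm x" for x \<omega>
    unfolding FF by (rule Fbd[OF c\<phi> erg eos wc])
  have Fdiff: "F' x \<omega> - F' y \<omega> = F' (x - y) \<omega>" for x y \<omega>
    unfolding FF by (rule Fdiff[OF c\<phi> erg eos wc])
  have Fset: "{\<omega>. F' x \<omega> = r} \<in> sets borel" for x r
    unfolding FF by (rule Fset[OF c\<phi> erg eos wc])
  obtain D :: "('a \<Rightarrow>\<^sub>C real) set" where Dc: "countable D" and Dd: "\<And>x e. e > 0 \<Longrightarrow> \<exists>d\<in>D. norm (x - d) \<le> e"
    using dense_countable[OF cpt] by blast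
  have clin: "c x - c y = c (x - y)" for x y
  proof -
    have "AE \<omega> in \<mu>. c x - c y = c (x - y)"
      using Fae[of x] Fae[of y] Fae[of "x - y"] by eventually_elim (use Fdiff in metis)
    then show ?thesis by simp
  qed
  have cbd: "\<bar>c x\<bar> \<le> norm x" for x
  proof -
    have "AE \<omega> in \<mu>. \<bar>c x\<bar> \<le> norm x"
      using Fae[of x] by eventually_elim (use Fbd in metis)
    then show ?thesis by simp
  qed
  have Teq: "{\<omega>. \<forall>x. F' x \<omega> = c x} = (\<Inter>d\<in>D. {\<omega>. F' d \<omega> = c d})"
  proof (intro set_eqI iffI)
    fix \<omega> assume "\<omega> \<in> (\<Inter>d\<in>D. {\<omega>. F' d \<omega> = c d})"
    then have hD: "\<And>d. d \<in> D \<Longrightarrow> F' d \<omega> = c d" by auto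
    have "F' x \<omega> = c x" for x
    proof -
      have le: "\<bar>F' x \<omega> - c x\<bar> \<le> 2 * e" if e: "e > 0" for e
      proof -
        obtain d where d: "d \<in> D" "norm (x - d) \<le> e" using Dd[OF e] by blast
        have "\<bar>F' x \<omega> - c x\<bar> = \<bar>(F' x \<omega> - F' d \<omega>) - (c x - c d)\<bar>" using hD[OF d(1)] by simp
        also have "\<dots> = \<bar>F' (x - d) \<omega> - c (x - d)\<bar>" by (simp add: Fdiff clin)
        also have "\<dots> \<le> \<bar>F' (x - d) \<omega>\<bar> + \<bar>c (x - d)\<bar>" by (rule abs_triangle_ineq4)
        also have "\<dots> \<le> 2 * e" using Fbd[of "x - d" \<omega>] cbd[of "x - d"] d(2) by linarith
        finally show ?thesis .
      qed
      show ?thesis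
      proof (rule ccontr)
        assume "F' x \<omega> \<noteq> c x"
        then have "\<bar>F' x \<omega> - c x\<bar> > 0" by simp
        then have "\<bar>F' x \<omega> - c x\<bar> \<le> 2 * (\<bar>F' x \<omega> - c x\<bar> / 4)" using le[of "\<bar>F' x \<omega> - c x\<bar> / 4"] by simp
        with \<open>\<bar>F' x \<omega> - c x\<bar> > 0\<close> show False by (simp add: field_simps)
      qed
    qed
    then show "\<omega> \<in> {\<omega>. \<forall>x. F' x \<omega> = c x}" by simp
  qed auto
  have Tm: "{\<omega>. \<forall>x. F' x \<omega> = c x} \<in> sets borel"
    unfolding Teq
    by (rule sets.countable_INT''[OF _ Dc]) (use Fset in simp_all)
  have "AE \<omega> in \<mu>. \<forall>d\<in>D. F' d \<omega> = c d" by (subst AE_ball_countable[OF Dc]) (use Fae in blast)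
  then have "AE \<omega> in \<mu>. \<omega> \<in> {\<omega>. \<forall>x. F' x \<omega> = c x}" unfolding Teq by simp
  then have "prob {\<omega>. \<forall>x. F' x \<omega> = c x} = 1"
    using AE_in_set_eq_1[of "{\<omega>. \<forall>x. F' x \<omega> = c x}"] Tm S[OF c\<phi> erg] by simp
  then have "emeasure \<mu> {\<omega>. \<forall>x. F' x \<omega> = c x} = 1" by (simp add: emeasure_eq_measure)
  with Tm show ?thesis by (simp add: F'_def c_def)
qed


end
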